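(* In the resource theory of unital maps on a $d$-dimensional Hilbert space with fixed orthonormal basis $\{\ket i\}_{i=1}^d$, let $C^k=\{\Pi^k/k\}$ and $C_2^k=\big(\{\ket i\bra i\}_{1\le i\le k}\big)^{\mathrm P}$ (the convex hull of the first $k$ basis projectors), for $1\le k\le d$. Then for every $k$, $C^k\to C_2^k$ and $C_2^k\to C^k$. In particular $\mathcal C_2=\{C_2^k\}_{k=1}^d\cup\{\Omega\}$ is a currency for $S^\Omega$ with value function $\mathrm{Val}(C_2^k)=\log d-\log k$, $\mathrm{Val}(\Omega)=0$.
   Context: $\Omega$ is the set of density operators on a Hilbert space of dimension $d$; $S^\Omega$ the set of its non-empty subsets; $\Pi^k=\sum_{i=1}^k\ket i\bra i$. Allowed transformations: $f_{\mathcal E}(V)=\{\mathcal E(\rho):\rho\in V\}$ for unital CPTP maps $\mathcal E$; $V\to W$ iff some such $\mathcal E$ has $\mathcal E(\rho)\in W$ for all $\rho\in V$. Logarithms base 2. A subset $\mathcal C$ is a currency for target $\mathcal S$ if (Order) any two elements of $\mathcal C$ are comparable under $\to$ and $\Omega\in\mathcal C$; (Universality) $\Omega\in\mathcal S$ and every $V\in\mathcal S$ has $C,C'\in\mathcal C$ with $C\to V$, $V\to C'$. A value function $\mathrm{Val}:\mathcal C\to\mathbb R_{\ge0}$ satisfies $\mathrm{Val}(C')\ge\mathrm{Val}(C)\iff C'\to C$ and $\mathrm{Val}(\Omega)=0$. *)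

theory Defs
  imports Complex_Main "Jordan_Normal_Form.Matrix"
begin

definition mtrace :: "complex mat \<Rightarrow> complex" where
  "mtrace A = (\<Sum>i<dim_row A. A $$ (i, i))"

definition madj :: "complex mat \<Rightarrow> complex mat" where
  "madj A = mat (dim_col A) (dim_row A) (\<lambda>(i, j). cnj (A $$ (j, i)))"

definition psd :: "nat \<Rightarrow> complex mat \<Rightarrow> bool" where
  "psd n A \<longleftrightarrow> A \<in> carrier_mat n n \<and> A = madj A \<and>
     (\<forall>v :: nat \<Rightarrow> complex. 0 \<le> Re (\<Sum>i<n. \<Sum>j<n. cnj (v i) * A $$ (i, j) * v j))"

definition density_ops :: "nat \<Rightarrow> complex mat set" where
  "density_ops d = {\<rho>. psd d \<rho> \<and> mtrace \<rho> = 1}"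

definition S_Omega :: "nat \<Rightarrow> complex mat set set" where
  "S_Omega d = {V. V \<noteq> {} \<and> V \<subseteq> density_ops d}"

definition linear_on :: "nat \<Rightarrow> (complex mat \<Rightarrow> complex mat) \<Rightarrow> bool" where
  "linear_on d E \<longleftrightarrow>
     (\<forall>A \<in> carrier_mat d d. E A \<in> carrier_mat d d) \<and>
     (\<forall>A \<in> carrier_mat d d. \<forall>B \<in> carrier_mat d d. E (A + B) = E A + E B) \<and>
     (\<forall>A \<in> carrier_mat d d. \<forall>c. E (c \<cdot>\<^sub>m A) = c \<cdot>\<^sub>m E A)"

text \<open>(id_n \<otimes> E) applied to an (n*d) x (n*d) matrix, viewed as an n x n array of d x d blocks.\<close>
definition block_apply :: "nat \<Rightarrow> nat \<Rightarrow> (complex mat \<Rightarrow> complex mat) \<Rightarrow> complex mat \<Rightarrow> complex mat" where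
  "block_apply n d E M = mat (n * d) (n * d) (\<lambda>(r, c).
      E (mat d d (\<lambda>(a, b). M $$ ((r div d) * d + a, (c div d) * d + b))) $$ (r mod d, c mod d))"

definition completely_positive :: "nat \<Rightarrow> (complex mat \<Rightarrow> complex mat) \<Rightarrow> bool" where
  "completely_positive d E \<longleftrightarrow>
     (\<forall>n M. psd (n * d) M \<longrightarrow> psd (n * d) (block_apply n d E M))"

definition trace_preserving :: "nat \<Rightarrow> (complex mat \<Rightarrow> complex mat) \<Rightarrow> bool" where
  "trace_preserving d E \<longleftrightarrow> (\<forall>A \<in> carrier_mat d d. mtrace (E A) = mtrace A)"

definition unital :: "nat \<Rightarrow> (complex mat \<Rightarrow> complex mat) \<Rightarrow> bool" where
  "unital d E \<longleftrightarrow> E (1\<^sub>m d) = 1\<^sub>m d"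

definition unital_channel :: "nat \<Rightarrow> (complex mat \<Rightarrow> complex mat) \<Rightarrow> bool" where
  "unital_channel d E \<longleftrightarrow> linear_on d E \<and> completely_positive d E \<and>
     trace_preserving d E \<and> unital d E"

definition transforms :: "nat \<Rightarrow> complex mat set \<Rightarrow> complex mat set \<Rightarrow> bool" where
  "transforms d V W \<longleftrightarrow> (\<exists>E. unital_channel d E \<and> (\<forall>\<rho> \<in> V. E \<rho> \<in> W))"

text \<open>|i+1><i+1| (0-indexed i).\<close>
definition basis_proj :: "nat \<Rightarrow> nat \<Rightarrow> complex mat" where
  "basis_proj d i = mat d d (\<lambda>(a, b). if a = i \<and> b = i then 1 else 0)"

definition Pi_k :: "nat \<Rightarrow> nat \<Rightarrow> complex mat" where
  "Pi_k d k = mat d d (\<lambda>(a, b). \<Sum>i<k. basis_proj d i $$ (a, b))"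

definition C_set :: "nat \<Rightarrow> nat \<Rightarrow> complex mat set" where
  "C_set d k = {(1 / of_nat k) \<cdot>\<^sub>m Pi_k d k}"

definition C2_set :: "nat \<Rightarrow> nat \<Rightarrow> complex mat set" where
  "C2_set d k = {mat d d (\<lambda>(a, b). \<Sum>i<k. complex_of_real (p i) * basis_proj d i $$ (a, b)) | p.
                   (\<forall>i<k. 0 \<le> p i) \<and> (\<Sum>i<k. p i) = 1}"

definition is_currency :: "nat \<Rightarrow> complex mat set set \<Rightarrow> complex mat set set \<Rightarrow> bool" where
  "is_currency d Cur S \<longleftrightarrow>
     Cur \<subseteq> S_Omega d \<and>
     (\<forall>C \<in> Cur. \<forall>C' \<in> Cur. transforms d C C' \<or> transforms d C' C) \<and>
     density_ops d \<in> Cur \<and>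
     density_ops d \<in> S \<and>
     (\<forall>V \<in> S. \<exists>C \<in> Cur. \<exists>C' \<in> Cur. transforms d C V \<and> transforms d V C')"

definition is_value_function :: "nat \<Rightarrow> complex mat set set \<Rightarrow> (complex mat set \<Rightarrow> real) \<Rightarrow> bool" where
  "is_value_function d Cur Val \<longleftrightarrow>
     (\<forall>C \<in> Cur. 0 \<le> Val C) \<and>
     (\<forall>C \<in> Cur. \<forall>C' \<in> Cur. Val C \<le> Val C' \<longleftrightarrow> transforms d C' C) \<and>
     Val (density_ops d) = 0"

definition Cur2 :: "nat \<Rightarrow> complex mat set set" where
  "Cur2 d = C2_set d ` {1..d} \<union> {density_ops d}"

end

theory Submission
  imports Defs
begin


definition qf :: "nat \<Rightarrow> (nat \<Rightarrow> nat \<Rightarrow> complex) \<Rightarrow> (nat \<Rightarrow> complex) \<Rightarrow> complex" where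
  "qf n S v = (\<Sum>i<n. \<Sum>j<n. cnj (v i) * S i j * v j)"

definition hpsd :: "nat \<Rightarrow> (nat \<Rightarrow> nat \<Rightarrow> complex) \<Rightarrow> bool" where
  "hpsd n S \<longleftrightarrow> (\<forall>i<n. \<forall>j<n. S j i = cnj (S i j)) \<and> (\<forall>v. 0 \<le> Re (qf n S v))"

lemma hpsd_herm: "hpsd n S \<Longrightarrow> i < n \<Longrightarrow> j < n \<Longrightarrow> S j i = cnj (S i j)"
  unfolding hpsd_def by blast

lemma hpsd_pos: "hpsd n S \<Longrightarrow> 0 \<le> Re (qf n S v)"
  unfolding hpsd_def by blast

lemma qf_Suc: "qf (Suc n) S v = qf n S v + (\<Sum>i<n. cnj (v i) * S i n) * v n
   + cnj (v n) * (\<Sum>j<n. S n j * v j) + cnj (v n) * S n n * v n"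
  by (simp add: qf_def sum.distrib sum_distrib_left sum_distrib_right algebra_simps)

lemma qf_cong: "(\<And>i. i < n \<Longrightarrow> v i = w i) \<Longrightarrow> qf n S v = qf n S w"
  unfolding qf_def by (intro sum.cong refl) auto

lemma qf_delta:
  assumes "a < n"
  shows "qf n S (\<lambda>i. if i = a then c else 0) = cnj c * S a a * c"
proof -
  have "\<And>i. (\<Sum>j<n. cnj (if i = a then c else 0) * S i j * (if j = a then c else 0))
     = (if i = a then cnj c * S a a * c else 0)"
  proof -
    fix i
    have "(\<Sum>j<n. cnj (if i = a then c else 0) * S i j * (if j = a then c else 0))
        = (\<Sum>j<n. if j = a then cnj (if i = a then c else 0) * S i a * c else 0)"
      by (rule sum.cong) auto
    also have "\<dots> = cnj (if i = a then c else 0) * S i a * c" using assms by simp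
    finally show "?thesis i" by simp
  qed
  then have "qf n S (\<lambda>i. if i = a then c else 0) = (\<Sum>i<n. if i = a then cnj c * S a a * c else 0)"
    unfolding qf_def by simp
  also have "\<dots> = cnj c * S a a * c" using assms by simp
  finally show ?thesis .
qed

lemma hpsd_diag:
  assumes "hpsd n S" "a < n"
  shows "0 \<le> Re (S a a)" "S a a = of_real (Re (S a a))"
proof -
  have "qf n S (\<lambda>i. if i = a then 1 else 0) = S a a" using qf_delta[OF assms(2)] by simp
  then show "0 \<le> Re (S a a)" using assms(1) unfolding hpsd_def by metis
  have "S a a = cnj (S a a)" using assms unfolding hpsd_def by blast
  then show "S a a = of_real (Re (S a a))" by (metis Reals_cnj_iff complex_is_Real_iff of_real_Re)
qed

lemma hpsd_zero_col:
  assumes h: "hpsd (Suc n) S" and z: "S n n = 0" and a: "a < n"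
  shows "S a n = 0"
proof -
  have herm: "\<And>i j. i < Suc n \<Longrightarrow> j < Suc n \<Longrightarrow> S j i = cnj (S i j)" using h unfolding hpsd_def by blast
  define s where "s = Re (S a a)"
  have s0: "0 \<le> s" using hpsd_diag[OF h] a unfolding s_def by simp
  have saa: "S a a = of_real s" using hpsd_diag(2)[OF h, of a] a unfolding s_def by simp
  define r where "r = 1 / (s + 1)"
  have r0: "0 < r" using s0 unfolding r_def by simp
  have rs: "r * s < 1" using s0 unfolding r_def by (simp add: field_simps)
  define y where "y = S a n"
  have sna: "S n a = cnj y" unfolding y_def using herm[of a n] a by simp
  define c where "c = - of_real r * y"
  define v where "v = (\<lambda>i. if i = n then 1 else if i = a then c else (0::complex))"
  have vn: "v n = 1" unfolding v_def by simp
  have vr: "\<And>i. i < n \<Longrightarrow> v i = (if i = a then c else 0)" unfolding v_def by auto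
  have s1: "(\<Sum>i<n. cnj (v i) * S i n) = cnj c * y"
  proof -
    have "(\<Sum>i<n. cnj (v i) * S i n) = (\<Sum>i<n. if i = a then cnj c * y else 0)"
      by (rule sum.cong) (auto simp: vr y_def)
    then show ?thesis using a by simp
  qed
  have s2: "(\<Sum>j<n. S n j * v j) = cnj y * c"
  proof -
    have "(\<Sum>j<n. S n j * v j) = (\<Sum>j<n. if j = a then cnj y * c else 0)"
      by (rule sum.cong) (auto simp: vr sna)
    then show ?thesis using a by simp
  qed
  have s3: "qf n S v = cnj c * S a a * c"
    using qf_cong[of n v "\<lambda>i. if i = a then c else 0" S, OF vr] qf_delta[OF a] by simp
  have "qf (Suc n) S v = of_real r * of_real r * (cnj y * y) * of_real s - 2 * of_real r * (cnj y * y)"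
    unfolding qf_Suc s1 s2 s3 vn saa z c_def by (simp add: algebra_simps)
  also have "cnj y * y = of_real ((cmod y)^2)" by (metis complex_norm_square mult.commute of_real_power)
  finally have "qf (Suc n) S v = of_real (r * (cmod y)^2 * (r * s - 2))" by (simp add: algebra_simps)
  then have "Re (qf (Suc n) S v) = r * (cmod y)^2 * (r * s - 2)" by (simp only: Re_complex_of_real)
  moreover have "0 \<le> Re (qf (Suc n) S v)" using h unfolding hpsd_def by blast
  ultimately have "r * (cmod y)^2 * (r * s - 2) \<ge> 0" by simp
  moreover have "r * s - 2 < 0" using rs by simp
  ultimately have "r * (cmod y)^2 \<le> 0" using mult_pos_neg[of "r*(cmod y)^2" "r*s-2"] by linarith
  with r0 have "(cmod y)^2 \<le> 0" by (simp add: mult_le_0_iff)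
  then show ?thesis unfolding y_def by simp
qed

lemma hpsd_restrict: assumes "hpsd (Suc n) S" shows "hpsd n S"
  unfolding hpsd_def
proof (intro conjI allI impI)
  show "\<And>i j. i < n \<Longrightarrow> j < n \<Longrightarrow> S j i = cnj (S i j)" using assms unfolding hpsd_def by (meson less_SucI)
  fix v
  have "qf (Suc n) S (v(n := 0)) = qf n S (v(n:=0))" by (simp add: qf_Suc)
  also have "\<dots> = qf n S v" by (rule qf_cong) simp
  finally show "0 \<le> Re (qf n S v)" using assms unfolding hpsd_def by metis
qed

lemma schur_step_form:
  assumes herm: "\<And>i j. i < Suc n \<Longrightarrow> j < Suc n \<Longrightarrow> S j i = cnj (S i j)"
    and c: "S n n = of_real c" "c \<noteq> 0"
  shows "qf n (\<lambda>a b. S a b - S a n * S n b / of_real c) v =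
     qf (Suc n) S (v(n := - (\<Sum>j<n. S n j * v j) / of_real c))"
proof -
  define B where "B = (\<Sum>j<n. S n j * v j)"
  define t where "t = - B / of_real c"
  define w where "w = v(n := t)"
  have cB: "(\<Sum>i<n. cnj (w i) * S i n) = cnj B"
    unfolding B_def cnj_sum w_def
  proof (rule sum.cong)
    fix x assume "x \<in> {..<n}"
    then have "S x n = cnj (S n x)" using herm[of n x] by simp
    then show "cnj ((v(n := t)) x) * S x n = cnj (S n x * v x)" using \<open>x \<in> {..<n}\<close> by simp
  qed simp
  have wB: "(\<Sum>j<n. S n j * w j) = B" unfolding B_def w_def by (rule sum.cong) auto
  have qw: "qf n S w = qf n S v" by (rule qf_cong) (simp add: w_def)
  have "qf (Suc n) S w = qf n S v + cnj B * t + cnj t * B + cnj t * of_real c * t"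
    unfolding qf_Suc cB wB qw c by (simp add: w_def)
  also have "\<dots> = qf n S v - cnj B * B / of_real c"
  proof -
    have ct: "cnj t = - cnj B / of_real c" unfolding t_def by simp
    show ?thesis unfolding ct unfolding t_def using c(2) by (simp add: field_simps)
  qed
  finally have 1: "qf (Suc n) S w = qf n S v - cnj B * B / of_real c" .
  have "qf n (\<lambda>a b. S a b - S a n * S n b / of_real c) v
      = qf n S v - (\<Sum>i<n. \<Sum>j<n. (cnj (v i) * S i n) * (S n j * v j)) / of_real c"
  proof -
    have e: "\<And>i j. cnj (v i) * (S i j - S i n * S n j / of_real c) * v j
       = cnj (v i) * S i j * v j - (cnj (v i) * S i n) * (S n j * v j) / of_real c"
      by (simp add: algebra_simps diff_divide_distrib)
    show ?thesis unfolding qf_def e sum_subtractf sum_divide_distrib ..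
  qed
  also have "(\<Sum>i<n. \<Sum>j<n. (cnj (v i) * S i n) * (S n j * v j)) = (\<Sum>i<n. cnj (v i) * S i n) * B"
    unfolding B_def by (simp add: sum_product)
  also have "(\<Sum>i<n. cnj (v i) * S i n) = cnj B"
    unfolding B_def cnj_sum
  proof (rule sum.cong)
    fix x assume "x \<in> {..<n}"
    then have "S x n = cnj (S n x)" using herm[of n x] by simp
    then show "cnj (v x) * S x n = cnj (S n x * v x)" by simp
  qed simp
  finally have 2: "qf n (\<lambda>a b. S a b - S a n * S n b / of_real c) v = qf n S v - cnj B * B / of_real c" .
  have w_eq: "w = v(n := - (\<Sum>j<n. S n j * v j) / of_real c)" unfolding w_def t_def B_def ..
  show ?thesis by (subst w_eq[symmetric]) (simp only: 1 2)
qed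

lemma hpsd_decomp:
  "hpsd n S \<Longrightarrow> \<exists>u. \<forall>a<n. \<forall>b<n. S a b = (\<Sum>m<n. u m a * cnj (u m b))"
proof (induction n arbitrary: S)
  case 0 then show ?case by simp
next
  case (Suc n S)
  have herm: "\<And>i j. i < Suc n \<Longrightarrow> j < Suc n \<Longrightarrow> S j i = cnj (S i j)"
    using Suc.prems unfolding hpsd_def by blast
  show ?case
  proof (cases "S n n = 0")
    case True
    have col: "\<And>a. a < Suc n \<Longrightarrow> S a n = 0"
      using hpsd_zero_col[OF Suc.prems True] True by (metis less_SucE)
    have row: "\<And>a. a < Suc n \<Longrightarrow> S n a = 0"
      using col herm by (metis complex_cnj_zero lessI)
    obtain u' where u': "\<forall>a<n. \<forall>b<n. S a b = (\<Sum>m<n. u' m a * cnj (u' m b))"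
      using Suc.IH[OF hpsd_restrict[OF Suc.prems]] by blast
    define u where "u = (\<lambda>m a. if m < n \<and> a < n then u' m a else 0)"
    show ?thesis
    proof (intro exI allI impI)
      fix a b assume a: "a < Suc n" and b: "b < Suc n"
      show "S a b = (\<Sum>m<Suc n. u m a * cnj (u m b))"
      proof (cases "a < n \<and> b < n")
        case True
        then show ?thesis using u' by (simp add: u_def)
      next
        case False
        then have "a = n \<or> b = n" using a b by auto
        then have "S a b = 0" using row col a b by auto
        moreover have "(\<Sum>m<Suc n. u m a * cnj (u m b)) = 0"
          using False by (intro sum.neutral) (auto simp: u_def)
        ultimately show ?thesis by simp
      qed
    qed
  next
    case False
    define c where "c = Re (S n n)"
    have snn: "S n n = of_real c" using hpsd_diag(2)[OF Suc.prems, of n] unfolding c_def by simp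
    have c0: "0 \<le> c" using hpsd_diag(1)[OF Suc.prems, of n] unfolding c_def by simp
    have cne: "c \<noteq> 0" using False snn by auto
    define S' where "S' = (\<lambda>a b. S a b - S a n * S n b / of_real c)"
    have hS': "hpsd n S'"
      unfolding hpsd_def
    proof (intro conjI allI impI)
      fix i j assume i: "i < n" and j: "j < n"
      have 1: "S j i = cnj (S i j)" using i j by (intro herm) auto
      have 2: "S j n = cnj (S n j)" using herm[of n j] j by simp
      have 3: "S n i = cnj (S i n)" using herm[of i n] i by simp
      show "S' j i = cnj (S' i j)" unfolding S'_def 1 2 3 by (simp add: mult.commute)
    next
      fix v
      show "0 \<le> Re (qf n S' v)"
      proof -
        have pos: "\<And>w. 0 \<le> Re (qf (Suc n) S w)" using Suc.prems unfolding hpsd_def by blast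
        have "qf n S' v = qf (Suc n) S (v(n := - (\<Sum>j<n. S n j * v j) / of_real c))"
          unfolding S'_def by (rule schur_step_form[of n S c, OF herm snn cne])
        then show ?thesis using pos by simp
      qed
    qed
    obtain u' where u': "\<forall>a<n. \<forall>b<n. S' a b = (\<Sum>m<n. u' m a * cnj (u' m b))"
      using Suc.IH[OF hS'] by blast
    define u where "u = (\<lambda>m a. if m < n then (if a < n then u' m a else 0) else S a n / of_real (sqrt c))"
    show ?thesis
    proof (intro exI allI impI)
      fix a b assume a: "a < Suc n" and b: "b < Suc n"
      have sq: "of_real (sqrt c) * of_real (sqrt c) = (of_real c :: complex)"
        using c0 by (simp flip: of_real_mult)
      have un: "u n a * cnj (u n b) = S a n * cnj (S b n) / of_real c"
      proof -
        have "u n a * cnj (u n b) = (S a n / of_real (sqrt c)) * (cnj (S b n) / of_real (sqrt c))"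
          unfolding u_def by simp
        also have "\<dots> = S a n * cnj (S b n) / (of_real (sqrt c) * of_real (sqrt c))"
          by (simp only: times_divide_times_eq)
        finally show ?thesis unfolding sq .
      qed
      have "(\<Sum>m<Suc n. u m a * cnj (u m b)) = (\<Sum>m<n. u m a * cnj (u m b)) + S a n * cnj (S b n) / of_real c"
        by (simp only: sum.lessThan_Suc un)
      also have "cnj (S b n) = S n b" using herm[of b n] b by simp
      finally have E: "(\<Sum>m<Suc n. u m a * cnj (u m b)) = (\<Sum>m<n. u m a * cnj (u m b)) + S a n * S n b / of_real c" .
      show "S a b = (\<Sum>m<Suc n. u m a * cnj (u m b))"
      proof (cases "a < n \<and> b < n")
        case True
        then have "(\<Sum>m<n. u m a * cnj (u m b)) = S' a b" using u' by (simp add: u_def)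
        then show ?thesis unfolding E S'_def by simp
      next
        case F: False
        then have "(\<Sum>m<n. u m a * cnj (u m b)) = 0"
          by (intro sum.neutral) (auto simp: u_def)
        moreover have "S a n * S n b / of_real c = S a b"
        proof -
          have "a = n \<or> b = n" using F a b by auto
          then show ?thesis
          proof
            assume "a = n" then show ?thesis using snn cne by simp
          next
            assume "b = n" then show ?thesis using snn cne by simp
          qed
        qed
        ultimately show ?thesis unfolding E by simp
      qed
    qed
  qed
qed



lemma sum_split_blocks:
  fixes f :: "nat \<Rightarrow> 'a::comm_monoid_add"
  shows "(\<Sum>r<n*d. f r) = (\<Sum>R<n. \<Sum>a<d. f (R*d+a))"
proof (induction n)
  case 0 then show ?case by simp
next
  case (Suc n)
  have "{..<Suc n * d} = {..<n*d} \<union> {n*d..<n*d+d}" by auto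
  moreover have "(\<Sum>r\<in>{n*d..<n*d+d}. f r) = (\<Sum>a<d. f (n*d+a))"
    by (rule sum.reindex_bij_witness[where j="\<lambda>r. r - n*d" and i="\<lambda>a. n*d+a"]) auto
  ultimately show ?case using Suc by (simp add: sum.union_disjoint ivl_disj_int)
qed

lemma idx_lt: "(R::nat) < n \<Longrightarrow> a < d \<Longrightarrow> R*d+a < n*d"
proof -
  assume "R < n" "a < d"
  then have "R*d + a < R*d + d" by simp
  also have "\<dots> = Suc R * d" by simp
  also have "\<dots> \<le> n * d" using \<open>R < n\<close> by (intro mult_le_mono1) simp
  finally show ?thesis .
qed

lemma sum_collapse:
  fixes g :: "nat \<Rightarrow> 'a::comm_monoid_add"
  assumes "i < d" "\<And>a. a < d \<Longrightarrow> a \<noteq> i \<Longrightarrow> g a = 0"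
  shows "(\<Sum>a<d. g a) = g i"
proof -
  have "(\<Sum>a<d. g a) = (\<Sum>a<d. if a = i then g i else 0)"
    by (rule sum.cong) (use assms in auto)
  then show ?thesis using assms(1) by simp
qed

lemma block_hpsd:
  assumes h: "hpsd (n*d) M" and i: "i < d"
  shows "hpsd n (\<lambda>R C. M (R*d+i) (C*d+i))"
  unfolding hpsd_def
proof (intro conjI allI impI)
  have herm: "\<And>r c. r < n*d \<Longrightarrow> c < n*d \<Longrightarrow> M c r = cnj (M r c)" using hpsd_herm[OF h] by blast
  fix R C assume "R < n" "C < n"
  then show "M (C*d+i) (R*d+i) = cnj (M (R*d+i) (C*d+i))" using i by (intro herm idx_lt)
next
  fix w
  define x :: "nat \<Rightarrow> complex" where "x = (\<lambda>r. if r mod d = i then w (r div d) else 0)"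
  have xv: "\<And>R a. a < d \<Longrightarrow> x (R*d+a) = (if a = i then w R else 0)" unfolding x_def by simp
  define g where "g = (\<lambda>r. \<Sum>c<n*d. cnj (x r) * M r c * x c)"
  have "qf (n*d) M x = (\<Sum>R<n. \<Sum>a<d. g (R*d+a))" unfolding qf_def g_def by (rule sum_split_blocks)
  also have "\<dots> = (\<Sum>R<n. g (R*d+i))"
    by (rule sum.cong[OF refl], rule sum_collapse[OF i]) (simp add: g_def xv)
  also have "\<dots> = qf n (\<lambda>R C. M (R*d+i) (C*d+i)) w"
    unfolding qf_def
  proof (rule sum.cong[OF refl])
    fix R
    have "g (R*d+i) = (\<Sum>C<n. \<Sum>b<d. cnj (x (R*d+i)) * M (R*d+i) (C*d+b) * x (C*d+b))"
      unfolding g_def by (rule sum_split_blocks)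
    also have "\<dots> = (\<Sum>C<n. cnj (x (R*d+i)) * M (R*d+i) (C*d+i) * x (C*d+i))"
      by (rule sum.cong[OF refl], rule sum_collapse[OF i]) (simp add: xv)
    also have "\<dots> = (\<Sum>C<n. cnj (w R) * M (R*d+i) (C*d+i) * w C)" using i by (simp add: xv)
    finally show "g (R*d+i) = (\<Sum>C<n. cnj (w R) * M (R*d+i) (C*d+i) * w C)" .
  qed
  finally have "qf (n*d) M x = qf n (\<lambda>R C. M (R*d+i) (C*d+i)) w" .
  moreover have "0 \<le> Re (qf (n*d) M x)" using hpsd_pos[OF h] .
  ultimately show "0 \<le> Re (qf n (\<lambda>R C. M (R*d+i) (C*d+i)) w)" by simp
qed



lemma madj_eq:
  assumes A: "A \<in> carrier_mat n n"
  shows "A = madj A \<longleftrightarrow> (\<forall>i<n. \<forall>j<n. A $$ (j,i) = cnj (A $$ (i,j)))"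
proof
  assume e: "A = madj A"
  show "\<forall>i<n. \<forall>j<n. A $$ (j,i) = cnj (A $$ (i,j))"
  proof (intro allI impI)
    fix i j assume "i < n" "j < n"
    have "madj A $$ (j,i) = cnj (A $$ (i,j))" using A \<open>i<n\<close> \<open>j<n\<close> unfolding madj_def by simp
    then show "A $$ (j,i) = cnj (A $$ (i,j))" using e by simp
  qed
next
  assume h: "\<forall>i<n. \<forall>j<n. A $$ (j,i) = cnj (A $$ (i,j))"
  show "A = madj A"
  proof (rule eq_matI)
    fix i j assume "i < dim_row (madj A)" "j < dim_col (madj A)"
    then have ij: "i < n" "j < n" using A unfolding madj_def by auto
    have "madj A $$ (i,j) = cnj (A $$ (j,i))" using A ij unfolding madj_def by simp
    moreover have "A $$ (i,j) = cnj (A $$ (j,i))" using h ij by blast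
    ultimately show "A $$ (i,j) = madj A $$ (i,j)" by simp
  qed (use A in \<open>auto simp: madj_def\<close>)
qed

lemma psd_hpsd: "psd n A \<longleftrightarrow> A \<in> carrier_mat n n \<and> hpsd n (\<lambda>i j. A $$ (i,j))"
proof
  assume "psd n A"
  then have A: "A \<in> carrier_mat n n" and e: "A = madj A"
    and p: "\<forall>v. 0 \<le> Re (\<Sum>i<n. \<Sum>j<n. cnj (v i) * A $$ (i, j) * v j)" unfolding psd_def by auto
  show "A \<in> carrier_mat n n \<and> hpsd n (\<lambda>i j. A $$ (i,j))"
    unfolding hpsd_def qf_def using A p madj_eq[OF A] e by blast
next
  assume "A \<in> carrier_mat n n \<and> hpsd n (\<lambda>i j. A $$ (i,j))"
  then have A: "A \<in> carrier_mat n n" and h: "hpsd n (\<lambda>i j. A $$ (i,j))" by auto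
  have "A = madj A" using madj_eq[OF A] hpsd_herm[OF h] by blast
  moreover have "\<forall>v. 0 \<le> Re (\<Sum>i<n. \<Sum>j<n. cnj (v i) * A $$ (i, j) * v j)"
    using hpsd_pos[OF h] unfolding qf_def by blast
  ultimately show "psd n A" unfolding psd_def using A by blast
qed

definition mp :: "nat \<Rightarrow> (nat \<Rightarrow> complex mat) \<Rightarrow> complex mat \<Rightarrow> complex mat" where
  "mp d \<sigma> A = mat d d (\<lambda>(a,b). \<Sum>i<d. A $$ (i,i) * \<sigma> i $$ (a,b))"

lemma mp_index: "a < d \<Longrightarrow> b < d \<Longrightarrow> mp d \<sigma> A $$ (a,b) = (\<Sum>i<d. A $$ (i,i) * \<sigma> i $$ (a,b))"
  unfolding mp_def by simp

lemma mp_carrier[simp]: "mp d \<sigma> A \<in> carrier_mat d d" unfolding mp_def by simp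
lemma mp_dims[simp]: "dim_row (mp d \<sigma> A) = d" "dim_col (mp d \<sigma> A) = d" unfolding mp_def by simp_all

lemma mp_linear: "linear_on d (mp d \<sigma>)"
  unfolding linear_on_def
proof (intro conjI ballI allI)
  fix A B :: "complex mat" assume A: "A \<in> carrier_mat d d" and B: "B \<in> carrier_mat d d"
  show "mp d \<sigma> (A + B) = mp d \<sigma> A + mp d \<sigma> B"
    by (rule eq_matI) (use A B in \<open>auto simp: mp_index sum.distrib algebra_simps\<close>)
next
  fix A :: "complex mat" and c assume A: "A \<in> carrier_mat d d"
  show "mp d \<sigma> (c \<cdot>\<^sub>m A) = c \<cdot>\<^sub>m mp d \<sigma> A"
    by (rule eq_matI) (use A in \<open>auto simp: mp_index sum_distrib_left algebra_simps\<close>)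
qed simp

lemma mp_tp:
  assumes "\<And>i. i < d \<Longrightarrow> mtrace (\<sigma> i) = 1" "\<And>i. i < d \<Longrightarrow> \<sigma> i \<in> carrier_mat d d"
  shows "trace_preserving d (mp d \<sigma>)"
  unfolding trace_preserving_def
proof
  fix A :: "complex mat" assume A: "A \<in> carrier_mat d d"
  have "mtrace (mp d \<sigma> A) = (\<Sum>a<d. \<Sum>i<d. A $$ (i,i) * \<sigma> i $$ (a,a))"
    unfolding mtrace_def mp_dims by (rule sum.cong) (simp_all add: mp_index)
  also have "\<dots> = (\<Sum>i<d. A $$ (i,i) * (\<Sum>a<d. \<sigma> i $$ (a,a)))"
    by (subst sum.swap) (simp add: sum_distrib_left)
  also have "\<dots> = (\<Sum>i<d. A $$ (i,i))"
  proof (rule sum.cong[OF refl])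
    fix i assume "i \<in> {..<d}"
    then have "(\<Sum>a<d. \<sigma> i $$ (a,a)) = 1" using assms[of i] unfolding mtrace_def by auto
    then show "A $$ (i,i) * (\<Sum>a<d. \<sigma> i $$ (a,a)) = A $$ (i,i)" by simp
  qed
  also have "\<dots> = mtrace A" unfolding mtrace_def using A by simp
  finally show "mtrace (mp d \<sigma> A) = mtrace A" .
qed

lemma mp_unital:
  assumes "\<And>a b. a < d \<Longrightarrow> b < d \<Longrightarrow> (\<Sum>i<d. \<sigma> i $$ (a,b)) = (if a = b then 1 else 0)"
  shows "unital d (mp d \<sigma>)"
  unfolding unital_def
proof (rule eq_matI)
  fix a b assume "a < dim_row (1\<^sub>m d)" "b < dim_col (1\<^sub>m d)"
  then have ab: "a < d" "b < d" by auto
  have "mp d \<sigma> (1\<^sub>m d) $$ (a,b) = (\<Sum>i<d. \<sigma> i $$ (a,b))" using ab by (simp add: mp_index)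
  then show "mp d \<sigma> (1\<^sub>m d) $$ (a,b) = 1\<^sub>m d $$ (a,b)" using ab assms by simp
qed auto



lemma swap3: "(\<Sum>x\<in>A. \<Sum>y\<in>B. \<Sum>z\<in>C. f x y z) = (\<Sum>y\<in>B. \<Sum>z\<in>C. \<Sum>x\<in>A. (f x y z :: 'a::comm_monoid_add))"
  by (subst sum.swap) (rule sum.cong[OF refl], rule sum.swap)

lemma sum6:
  "(\<Sum>R\<in>A. \<Sum>a\<in>B. \<Sum>C\<in>A. \<Sum>b\<in>B. \<Sum>i\<in>D. \<Sum>m\<in>E. f R a C b i m) =
   (\<Sum>i\<in>D. \<Sum>m\<in>E. \<Sum>R\<in>A. \<Sum>C\<in>A. \<Sum>a\<in>B. \<Sum>b\<in>B. (f R a C b i m :: 'a::comm_monoid_add))"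
proof -
  have "(\<Sum>R\<in>A. \<Sum>a\<in>B. \<Sum>C\<in>A. \<Sum>b\<in>B. \<Sum>i\<in>D. \<Sum>m\<in>E. f R a C b i m) =
        (\<Sum>R\<in>A. \<Sum>a\<in>B. \<Sum>C\<in>A. \<Sum>i\<in>D. \<Sum>m\<in>E. \<Sum>b\<in>B. f R a C b i m)"
    by (intro sum.cong refl swap3)
  also have "\<dots> = (\<Sum>R\<in>A. \<Sum>a\<in>B. \<Sum>i\<in>D. \<Sum>m\<in>E. \<Sum>C\<in>A. \<Sum>b\<in>B. f R a C b i m)"
    by (intro sum.cong refl swap3)
  also have "\<dots> = (\<Sum>R\<in>A. \<Sum>i\<in>D. \<Sum>m\<in>E. \<Sum>a\<in>B. \<Sum>C\<in>A. \<Sum>b\<in>B. f R a C b i m)"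
    by (intro sum.cong refl swap3)
  also have "\<dots> = (\<Sum>i\<in>D. \<Sum>m\<in>E. \<Sum>R\<in>A. \<Sum>a\<in>B. \<Sum>C\<in>A. \<Sum>b\<in>B. f R a C b i m)"
    by (rule swap3)
  also have "\<dots> = (\<Sum>i\<in>D. \<Sum>m\<in>E. \<Sum>R\<in>A. \<Sum>C\<in>A. \<Sum>a\<in>B. \<Sum>b\<in>B. f R a C b i m)"
    by (intro sum.cong refl sum.swap)
  finally show ?thesis .
qed

lemma block_mp_index:
  assumes d: "0 < d" and rc: "r < n*d" "c < n*d"
  shows "block_apply n d (mp d \<sigma>) M $$ (r,c) =
     (\<Sum>i<d. M $$ ((r div d)*d+i, (c div d)*d+i) * \<sigma> i $$ (r mod d, c mod d))"
proof -
  have "block_apply n d (mp d \<sigma>) M $$ (r,c) =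
     mp d \<sigma> (mat d d (\<lambda>(a, b). M $$ ((r div d) * d + a, (c div d) * d + b))) $$ (r mod d, c mod d)"
    unfolding block_apply_def using rc by simp
  also have "\<dots> = (\<Sum>i<d. mat d d (\<lambda>(a, b). M $$ ((r div d) * d + a, (c div d) * d + b)) $$ (i,i) * \<sigma> i $$ (r mod d, c mod d))"
    using d by (simp add: mp_index)
  also have "\<dots> = (\<Sum>i<d. M $$ ((r div d)*d+i, (c div d)*d+i) * \<sigma> i $$ (r mod d, c mod d))"
  proof (rule sum.cong[OF refl])
    fix i assume "i \<in> {..<d}"
    then have i: "i < d" by simp
    have "mat d d (\<lambda>(a, b). M $$ ((r div d) * d + a, (c div d) * d + b)) $$ (i,i) = M $$ ((r div d)*d+i, (c div d)*d+i)"
      using i by (simp only: index_mat case_prod_conv)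
    then show "mat d d (\<lambda>(a, b). M $$ ((r div d) * d + a, (c div d) * d + b)) $$ (i,i) * \<sigma> i $$ (r mod d, c mod d) =
      M $$ ((r div d)*d+i, (c div d)*d+i) * \<sigma> i $$ (r mod d, c mod d)" by (simp only:)
  qed
  finally show ?thesis .
qed

lemma block_apply_carrier: "block_apply n d E M \<in> carrier_mat (n*d) (n*d)"
  unfolding block_apply_def by simp

lemma mp_cp:
  assumes d: "0 < d" and \<sigma>: "\<And>i. i < d \<Longrightarrow> psd d (\<sigma> i)"
  shows "completely_positive d (mp d \<sigma>)"
  unfolding completely_positive_def
proof (intro allI impI)
  fix n M assume M: "psd (n*d) M"
  define N where "N = block_apply n d (mp d \<sigma>) M"
  have hM: "hpsd (n*d) (\<lambda>r c. M $$ (r,c))" using M psd_hpsd by blast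
  have hs: "\<And>i. i < d \<Longrightarrow> hpsd d (\<lambda>a b. \<sigma> i $$ (a,b))" using \<sigma> psd_hpsd by blast
  have "\<forall>i. i < d \<longrightarrow> (\<exists>u. \<forall>a<d. \<forall>b<d. \<sigma> i $$ (a,b) = (\<Sum>m<d. u m a * cnj (u m b)))"
    using hpsd_decomp[OF hs] by blast
  then have "\<exists>U. \<forall>i. i < d \<longrightarrow> (\<forall>a<d. \<forall>b<d. \<sigma> i $$ (a,b) = (\<Sum>m<d. U i m a * cnj (U i m b)))"
    by (rule choice_iff'[THEN iffD1])
  then obtain U where U0: "\<forall>i. i < d \<longrightarrow> (\<forall>a<d. \<forall>b<d. \<sigma> i $$ (a,b) = (\<Sum>m<d. U i m a * cnj (U i m b)))"
    by blast
  have U: "\<And>i a b. i < d \<Longrightarrow> a < d \<Longrightarrow> b < d \<Longrightarrow> \<sigma> i $$ (a,b) = (\<Sum>m<d. U i m a * cnj (U i m b))"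
    using U0 by blast
  have Nidx: "\<And>r c. r < n*d \<Longrightarrow> c < n*d \<Longrightarrow> N $$ (r,c) =
     (\<Sum>i<d. M $$ ((r div d)*d+i, (c div d)*d+i) * \<sigma> i $$ (r mod d, c mod d))"
    unfolding N_def by (rule block_mp_index[OF d])
  have hN: "hpsd (n*d) (\<lambda>r c. N $$ (r,c))"
    unfolding hpsd_def
  proof (intro conjI allI impI)
    fix r c assume r: "r < n*d" and c: "c < n*d"
    have rd: "r mod d < d" "c mod d < d" using d by auto
    have rD: "r div d < n" "c div d < n" using r c by (auto simp: less_mult_imp_div_less)
    show "N $$ (c,r) = cnj (N $$ (r,c))"
      unfolding Nidx[OF r c] Nidx[OF c r] cnj_sum
    proof (rule sum.cong[OF refl])
      fix i assume "i \<in> {..<d}"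
      then have i: "i < d" by simp
      have 1: "M $$ ((c div d)*d+i, (r div d)*d+i) = cnj (M $$ ((r div d)*d+i, (c div d)*d+i))"
        using hpsd_herm[OF hM] idx_lt[OF rD(1) i] idx_lt[OF rD(2) i] by blast
      have 2: "\<sigma> i $$ (c mod d, r mod d) = cnj (\<sigma> i $$ (r mod d, c mod d))"
        using hpsd_herm[OF hs[OF i]] rd by blast
      show "M $$ ((c div d)*d+i, (r div d)*d+i) * \<sigma> i $$ (c mod d, r mod d) =
            cnj (M $$ ((r div d)*d+i, (c div d)*d+i) * \<sigma> i $$ (r mod d, c mod d))"
        unfolding 1 2 by simp
    qed
  next
    fix v
    define K where "K = (\<lambda>i R C. M $$ (R*d+i, C*d+i))"
    define y where "y = (\<lambda>i m R. \<Sum>b<d. cnj (U i m b) * v (R*d+b))"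
    define T where "T = (\<lambda>R a C b i m. cnj (v (R*d+a)) * K i R C * U i m a * cnj (U i m b) * v (C*d+b))"
    have "qf (n*d) (\<lambda>r c. N $$ (r,c)) v =
       (\<Sum>R<n. \<Sum>a<d. \<Sum>C<n. \<Sum>b<d. cnj (v (R*d+a)) * N $$ (R*d+a, C*d+b) * v (C*d+b))"
      unfolding qf_def sum_split_blocks by simp
    also have "\<dots> = (\<Sum>R<n. \<Sum>a<d. \<Sum>C<n. \<Sum>b<d. \<Sum>i<d. \<Sum>m<d. T R a C b i m)"
    proof (intro sum.cong refl)
      fix R a C b assume R: "R \<in> {..<n}" and a: "a \<in> {..<d}" and C: "C \<in> {..<n}" and b: "b \<in> {..<d}"
      have "N $$ (R*d+a, C*d+b) = (\<Sum>i<d. K i R C * \<sigma> i $$ (a, b))"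
        using R a C b by (simp add: Nidx idx_lt K_def)
      also have "\<dots> = (\<Sum>i<d. \<Sum>m<d. K i R C * U i m a * cnj (U i m b))"
        using a b by (intro sum.cong refl) (simp add: U sum_distrib_left mult.assoc)
      finally show "cnj (v (R*d+a)) * N $$ (R*d+a, C*d+b) * v (C*d+b) = (\<Sum>i<d. \<Sum>m<d. T R a C b i m)"
        unfolding T_def by (simp add: sum_distrib_left sum_distrib_right mult.assoc)
    qed
    also have "\<dots> = (\<Sum>i<d. \<Sum>m<d. \<Sum>R<n. \<Sum>C<n. \<Sum>a<d. \<Sum>b<d. T R a C b i m)"
      by (rule sum6)
    also have "\<dots> = (\<Sum>i<d. \<Sum>m<d. \<Sum>R<n. \<Sum>C<n. cnj (y i m R) * K i R C * y i m C)"
    proof (intro sum.cong refl)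
      fix i m R C
      have "cnj (y i m R) * K i R C * y i m C
         = K i R C * ((\<Sum>a<d. U i m a * cnj (v (R*d+a))) * (\<Sum>b<d. cnj (U i m b) * v (C*d+b)))"
        unfolding y_def cnj_sum by (simp add: mult_ac)
      also have "\<dots> = (\<Sum>a<d. \<Sum>b<d. K i R C * ((U i m a * cnj (v (R*d+a))) * (cnj (U i m b) * v (C*d+b))))"
        by (subst sum_product) (simp only: sum_distrib_left)
      also have "\<dots> = (\<Sum>a<d. \<Sum>b<d. T R a C b i m)"
        unfolding T_def by (simp add: mult_ac)
      finally show "(\<Sum>a<d. \<Sum>b<d. T R a C b i m) = cnj (y i m R) * K i R C * y i m C" by simp
    qed
    also have "\<dots> = (\<Sum>i<d. \<Sum>m<d. qf n (K i) (y i m))" by (simp add: qf_def)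
    finally have E: "qf (n*d) (\<lambda>r c. N $$ (r,c)) v = (\<Sum>i<d. \<Sum>m<d. qf n (K i) (y i m))" .
    have "\<And>i m. i < d \<Longrightarrow> 0 \<le> Re (qf n (K i) (y i m))"
      unfolding K_def using hpsd_pos[OF block_hpsd[OF hM]] by blast
    then show "0 \<le> Re (qf (n*d) (\<lambda>r c. N $$ (r,c)) v)"
      unfolding E Re_sum by (intro sum_nonneg) auto
  qed
  show "psd (n*d) (block_apply n d (mp d \<sigma>) M)"
    using psd_hpsd block_apply_carrier hN unfolding N_def by blast
qed



lemma sum_split_at:
  fixes f :: "nat \<Rightarrow> 'a::comm_monoid_add"
  assumes "k \<le> d" shows "(\<Sum>i<d. f i) = (\<Sum>i<k. f i) + (\<Sum>i\<in>{k..<d}. f i)"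
proof -
  have "{..<d} = {..<k} \<union> {k..<d}" using assms by auto
  moreover have "sum f ({..<k} \<union> {k..<d}) = sum f {..<k} + sum f {k..<d}"
    by (rule sum.union_disjoint) auto
  ultimately show ?thesis by simp
qed

lemma mat_eqI':
  assumes "A \<in> carrier_mat d d" "B \<in> carrier_mat d d" "\<And>a b. a < d \<Longrightarrow> b < d \<Longrightarrow> A $$ (a,b) = B $$ (a,b)"
  shows "A = B"
  by (rule eq_matI) (use assms in auto)

lemma mp_unital_channel:
  assumes d: "0 < d" and ps: "\<And>i. i < d \<Longrightarrow> psd d (\<sigma> i)" and tr: "\<And>i. i < d \<Longrightarrow> mtrace (\<sigma> i) = 1"
    and sm: "\<And>a b. a < d \<Longrightarrow> b < d \<Longrightarrow> (\<Sum>i<d. \<sigma> i $$ (a,b)) = (if a = b then 1 else 0)"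
  shows "unital_channel d (mp d \<sigma>)"
proof -
  have c: "\<And>i. i < d \<Longrightarrow> \<sigma> i \<in> carrier_mat d d" using ps unfolding psd_def by blast
  have 1: "completely_positive d (mp d \<sigma>)" using d ps by (rule mp_cp)
  have 2: "trace_preserving d (mp d \<sigma>)" using tr c by (rule mp_tp)
  have 3: "unital d (mp d \<sigma>)" using sm by (rule mp_unital)
  show ?thesis unfolding unital_channel_def using mp_linear 1 2 3 by blast
qed

definition dg :: "nat \<Rightarrow> (nat \<Rightarrow> real) \<Rightarrow> complex mat" where
  "dg d f = mat d d (\<lambda>(a,b). if a = b then of_real (f a) else 0)"

lemma dg_index: "a < d \<Longrightarrow> b < d \<Longrightarrow> dg d f $$ (a,b) = (if a = b then of_real (f a) else 0)"
  unfolding dg_def by simp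

lemma dg_carrier[simp]: "dg d f \<in> carrier_mat d d" unfolding dg_def by simp
lemma dg_dims[simp]: "dim_row (dg d f) = d" "dim_col (dg d f) = d" unfolding dg_def by simp_all

lemma dg_psd:
  assumes f: "\<And>a. a < d \<Longrightarrow> 0 \<le> f a"
  shows "psd d (dg d f)"
  unfolding psd_hpsd
proof (intro conjI)
  show "dg d f \<in> carrier_mat d d" by simp
  show "hpsd d (\<lambda>i j. dg d f $$ (i,j))"
    unfolding hpsd_def
  proof (intro conjI allI impI)
    fix i j assume "i < d" "j < d"
    then show "dg d f $$ (j,i) = cnj (dg d f $$ (i,j))" by (simp add: dg_index)
  next
    fix v
    have "qf d (\<lambda>i j. dg d f $$ (i,j)) v = (\<Sum>i<d. cnj (v i) * of_real (f i) * v i)"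
      unfolding qf_def
    proof (rule sum.cong[OF refl])
      fix i assume i: "i \<in> {..<d}"
      show "(\<Sum>j<d. cnj (v i) * dg d f $$ (i, j) * v j) = cnj (v i) * of_real (f i) * v i"
        by (subst sum_collapse[of i]) (use i in \<open>auto simp: dg_index\<close>)
    qed
    also have "\<dots> = (\<Sum>i<d. of_real (f i * (cmod (v i))^2))"
    proof (rule sum.cong[OF refl])
      fix i
      show "cnj (v i) * of_real (f i) * v i = of_real (f i * (cmod (v i))^2)"
        by (simp only: of_real_mult complex_norm_square) (simp add: mult_ac)
    qed
    finally have "Re (qf d (\<lambda>i j. dg d f $$ (i,j)) v) = (\<Sum>i<d. f i * (cmod (v i))^2)"
      by (simp add: Re_sum)
    also have "\<dots> \<ge> 0" using f by (intro sum_nonneg) simp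
    finally show "0 \<le> Re (qf d (\<lambda>i j. dg d f $$ (i,j)) v)" .
  qed
qed

lemma dg_trace: "mtrace (dg d f) = of_real (\<Sum>a<d. f a)"
  unfolding mtrace_def dg_dims of_real_sum by (rule sum.cong) (simp_all add: dg_index)

lemma basis_proj_dg: "basis_proj d i = dg d (\<lambda>a. if a = i then 1 else 0)"
  by (rule mat_eqI'[of _ d]) (auto simp: basis_proj_def dg_index)

lemma basis_proj_index: "a < d \<Longrightarrow> b < d \<Longrightarrow> basis_proj d i $$ (a,b) = (if a = i \<and> b = i then 1 else 0)"
  unfolding basis_proj_def by simp

lemma basis_proj_psd: "psd d (basis_proj d i)"
  unfolding basis_proj_dg by (rule dg_psd) simp

lemma basis_proj_trace: "i < d \<Longrightarrow> mtrace (basis_proj d i) = 1"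
  unfolding basis_proj_dg dg_trace by simp

lemma C2_entry:
  assumes "a < d" "b < d"
  shows "(\<Sum>i<k. complex_of_real (p i) * basis_proj d i $$ (a,b)) = (if a = b \<and> a < k then of_real (p a) else 0)"
proof -
  have "(\<Sum>i<k. complex_of_real (p i) * basis_proj d i $$ (a,b)) = (\<Sum>i<k. if i = a then (if a = b then of_real (p a) else 0) else 0)"
    by (rule sum.cong[OF refl]) (use assms in \<open>auto simp: basis_proj_index\<close>)
  also have "\<dots> = (if a = b \<and> a < k then of_real (p a) else 0)" by simp
  finally show ?thesis .
qed

lemma C2_dg:
  assumes k: "k \<le> d" and X: "X \<in> C2_set d k"
  obtains p where "\<forall>i<k. 0 \<le> p i" "(\<Sum>i<k. p i) = 1" "X = dg d (\<lambda>a. if a < k then p a else 0)"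
proof -
  obtain p where p: "\<forall>i<k. 0 \<le> p i" "(\<Sum>i<k. p i) = 1"
    and Xe: "X = mat d d (\<lambda>(a, b). \<Sum>i<k. complex_of_real (p i) * basis_proj d i $$ (a, b))"
    using X unfolding C2_set_def by blast
  have "X = dg d (\<lambda>a. if a < k then p a else 0)"
    unfolding Xe by (rule mat_eqI'[of _ d]) (simp_all add: C2_entry dg_index)
  then show ?thesis using p that by blast
qed

lemma dg_in_C2:
  assumes k: "k \<le> d" and p: "\<forall>i<k. 0 \<le> p i" "(\<Sum>i<k. p i) = 1"
    and f: "\<And>a. a < d \<Longrightarrow> f a = (if a < k then p a else 0)"
  shows "dg d f \<in> C2_set d k"
proof -
  have "dg d f = mat d d (\<lambda>(a, b). \<Sum>i<k. complex_of_real (p i) * basis_proj d i $$ (a, b))"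
    by (rule mat_eqI'[of _ d]) (simp_all add: C2_entry dg_index f)
  then show ?thesis unfolding C2_set_def using p by blast
qed

lemma sum_if_less:
  fixes p :: "nat \<Rightarrow> real"
  assumes "k \<le> d" shows "(\<Sum>a<d. if a < k then p a else 0) = (\<Sum>a<k. p a)"
  by (subst sum_split_at[OF assms]) auto

lemma C2_sub_density:
  assumes k: "k \<le> d" shows "C2_set d k \<subseteq> density_ops d"
proof
  fix X assume X: "X \<in> C2_set d k"
  obtain p where p: "\<forall>i<k. 0 \<le> p i" "(\<Sum>i<k. p i) = 1" and Xe: "X = dg d (\<lambda>a. if a < k then p a else 0)"
    using C2_dg[OF k X] by blast
  have "psd d X" unfolding Xe by (rule dg_psd) (use p in auto)
  moreover have "mtrace X = 1" unfolding Xe dg_trace sum_if_less[OF k] using p by simp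
  ultimately show "X \<in> density_ops d" unfolding density_ops_def by blast
qed

definition dph :: "nat \<Rightarrow> complex mat \<Rightarrow> complex mat" where
  "dph d = mp d (basis_proj d)"

lemma dph_carrier[simp]: "dph d A \<in> carrier_mat d d" unfolding dph_def by simp

lemma dph_channel: "0 < d \<Longrightarrow> unital_channel d (dph d)"
  unfolding dph_def
proof (rule mp_unital_channel)
  fix a b assume ab: "a < d" "b < d"
  have "(\<Sum>i<d. basis_proj d i $$ (a, b)) = (\<Sum>i<d. if i = a then (if a = b then 1 else 0) else 0)"
    by (rule sum.cong[OF refl]) (auto simp: basis_proj_index ab)
  then show "(\<Sum>i<d. basis_proj d i $$ (a, b)) = (if a = b then 1 else 0)" using ab by simp
qed (auto simp: basis_proj_psd basis_proj_trace)

lemma dph_index: "a < d \<Longrightarrow> b < d \<Longrightarrow> dph d A $$ (a,b) = (if a = b then A $$ (a,a) else 0)"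
proof -
  assume ab: "a < d" "b < d"
  have "dph d A $$ (a,b) = (\<Sum>i<d. if i = a then (if a = b then A $$ (a,a) else 0) else 0)"
  proof -
    have "dph d A $$ (a,b) = (\<Sum>i<d. A $$ (i,i) * basis_proj d i $$ (a,b))"
      unfolding dph_def using ab by (simp add: mp_index)
    also have "\<dots> = (\<Sum>i<d. if i = a then (if a = b then A $$ (a,a) else 0) else 0)"
      by (rule sum.cong[OF refl]) (auto simp: basis_proj_index ab)
    finally show ?thesis .
  qed
  also have "\<dots> = (if a = b then A $$ (a,a) else 0)" using ab by simp
  finally show ?thesis .
qed

lemma dph_density:
  assumes X: "X \<in> density_ops d" shows "dph d X \<in> C2_set d d"
proof -
  have ps: "psd d X" and tr: "mtrace X = 1" using X unfolding density_ops_def by auto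
  have h: "hpsd d (\<lambda>i j. X $$ (i,j))" using ps psd_hpsd by blast
  have "dph d X = dg d (\<lambda>a. Re (X $$ (a,a)))"
  proof (rule mat_eqI'[of _ d])
    fix a b assume ab: "a < d" "b < d"
    show "dph d X $$ (a,b) = dg d (\<lambda>a. Re (X $$ (a,a))) $$ (a,b)"
      using ab hpsd_diag(2)[OF h, of a] by (cases "a = b") (simp_all add: dph_index dg_index)
  qed simp_all
  moreover have "dg d (\<lambda>a. Re (X $$ (a,a))) \<in> C2_set d d"
  proof (rule dg_in_C2)
    show "\<forall>i<d. 0 \<le> Re (X $$ (i,i))" using hpsd_diag(1)[OF h] by blast
    have "dim_row X = d" using ps unfolding psd_def by auto
    then have "(\<Sum>i<d. Re (X $$ (i,i))) = Re (mtrace X)" unfolding mtrace_def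
      by (simp add: Re_sum)
    then show "(\<Sum>i<d. Re (X $$ (i,i))) = 1" using tr by simp
  qed auto
  ultimately show ?thesis by simp
qed

lemma dph_C2:
  assumes k: "k \<le> k'" "k' \<le> d" and X: "X \<in> C2_set d k" shows "dph d X \<in> C2_set d k'"
proof -
  have kd: "k \<le> d" using k by simp
  obtain p where p: "\<forall>i<k. 0 \<le> p i" "(\<Sum>i<k. p i) = 1" and Xe: "X = dg d (\<lambda>a. if a < k then p a else 0)"
    using C2_dg[OF kd X] by blast
  have "dph d X = dg d (\<lambda>a. if a < k then p a else 0)"
    unfolding Xe by (rule mat_eqI'[of _ d]) (simp_all add: dph_index dg_index)
  also have "\<dots> \<in> C2_set d k'"
  proof (rule dg_in_C2[where p="\<lambda>a. if a < k then p a else 0"])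
    show "\<forall>i<k'. 0 \<le> (if i < k then p i else 0)" using p by auto
    show "(\<Sum>i<k'. if i < k then p i else 0) = 1" using sum_if_less[OF k(1)] p by simp
  qed (use k in auto)
  finally show ?thesis .
qed



lemma basis_proj_carrier[simp]: "basis_proj d i \<in> carrier_mat d d" unfolding basis_proj_def by simp
lemma basis_proj_dims[simp]: "dim_row (basis_proj d i) = d" "dim_col (basis_proj d i) = d" unfolding basis_proj_def by simp_all

lemma uc_carrier: "unital_channel d E \<Longrightarrow> A \<in> carrier_mat d d \<Longrightarrow> E A \<in> carrier_mat d d"
  unfolding unital_channel_def linear_on_def by blast

lemma uc_pos:
  assumes E: "unital_channel d E" and A: "psd d A"
  shows "psd d (E A)"
proof -
  have Ac: "A \<in> carrier_mat d d" using A unfolding psd_def by blast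
  have EAc: "E A \<in> carrier_mat d d" using uc_carrier[OF E Ac] .
  have cpE: "completely_positive d E" using E unfolding unital_channel_def by blast
  have A1: "psd (1*d) A" using A by simp
  have cp0: "psd (1*d) (block_apply 1 d E A)" using cpE A1 unfolding completely_positive_def by blast
  then have cp: "psd d (block_apply 1 d E A)" by simp
  have inner: "\<And>r c. r < d \<Longrightarrow> c < d \<Longrightarrow> mat d d (\<lambda>(a, b). A $$ ((r div d) * d + a, (c div d) * d + b)) = A"
    by (rule mat_eqI'[of _ d]) (use Ac in auto)
  have "block_apply 1 d E A = E A"
  proof (rule mat_eqI'[of _ d])
    show "block_apply 1 d E A \<in> carrier_mat d d" using block_apply_carrier[of 1 d E A] by simp
    show "E A \<in> carrier_mat d d" by (rule EAc)
    fix r c assume rc: "r < d" "c < d"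
    show "block_apply 1 d E A $$ (r,c) = E A $$ (r,c)"
      unfolding block_apply_def using rc inner[OF rc] by simp
  qed
  then show ?thesis using cp by simp
qed

lemma lin_zero:
  assumes L: "linear_on d E" shows "E (0\<^sub>m d d) = 0\<^sub>m d d"
proof -
  have z: "(0::complex) \<cdot>\<^sub>m 0\<^sub>m d d = 0\<^sub>m d d" by (rule mat_eqI'[of _ d]) auto
  have c: "E (0\<^sub>m d d) \<in> carrier_mat d d" using L unfolding linear_on_def by simp
  have l: "E ((0::complex) \<cdot>\<^sub>m 0\<^sub>m d d) = 0 \<cdot>\<^sub>m E (0\<^sub>m d d)"
    using L unfolding linear_on_def by (meson zero_carrier_mat)
  have "E (0\<^sub>m d d) = E ((0::complex) \<cdot>\<^sub>m 0\<^sub>m d d)" using z by simp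
  also have "\<dots> = 0 \<cdot>\<^sub>m E (0\<^sub>m d d)" by (rule l)
  also have "\<dots> = 0\<^sub>m d d" by (rule mat_eqI'[of _ d]) (use c in auto)
  finally show ?thesis .
qed

lemma Pi_k_0: "Pi_k d 0 = 0\<^sub>m d d" unfolding Pi_k_def by (rule mat_eqI'[of _ d]) auto
lemma Pi_k_carrier[simp]: "Pi_k d j \<in> carrier_mat d d" unfolding Pi_k_def by simp
lemma Pi_k_Suc: "Pi_k d (Suc j) = Pi_k d j + basis_proj d j"
  unfolding Pi_k_def by (rule mat_eqI'[of _ d]) (auto simp: basis_proj_index)
lemma Pi_k_index: "a < d \<Longrightarrow> b < d \<Longrightarrow> Pi_k d k $$ (a,b) = (if a = b \<and> a < k then 1 else 0)"
  unfolding Pi_k_def using C2_entry[where p="\<lambda>_. 1" and k=k and a=a and b=b and d=d] by simp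
lemma Pi_k_d: "Pi_k d d = 1\<^sub>m d"
  by (rule mat_eqI'[of _ d]) (auto simp: Pi_k_index)

lemma E_Pi:
  assumes L: "linear_on d E" and ab: "a < d" "b < d"
  shows "E (Pi_k d j) $$ (a,b) = (\<Sum>i<j. E (basis_proj d i) $$ (a,b))"
proof (induction j)
  case 0 then show ?case using lin_zero[OF L] ab by (simp add: Pi_k_0)
next
  case (Suc j)
  have "E (Pi_k d (Suc j)) = E (Pi_k d j) + E (basis_proj d j)"
    unfolding Pi_k_Suc using L unfolding linear_on_def by simp
  moreover have "E (Pi_k d j) \<in> carrier_mat d d" "E (basis_proj d j) \<in> carrier_mat d d"
    using L unfolding linear_on_def by simp_all
  ultimately show ?case using Suc ab by simp
qed

lemma basis_proj_in_C2:
  assumes "i < k'" "k' \<le> d" shows "basis_proj d i \<in> C2_set d k'"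
  unfolding basis_proj_dg
  by (rule dg_in_C2[where p="\<lambda>a. if a = i then 1 else 0"]) (use assms in auto)

lemma no_trans:
  assumes E: "unital_channel d E" and k: "k < k'" "k' \<le> d"
    and m: "\<forall>\<rho>\<in>C2_set d k'. E \<rho> \<in> C2_set d k"
  shows False
proof -
  have L: "linear_on d E" using E unfolding unital_channel_def by blast
  define e where "e = (\<lambda>i a. Re (E (basis_proj d i) $$ (a,a)))"
  have e0: "\<And>i a. i < d \<Longrightarrow> a < d \<Longrightarrow> 0 \<le> e i a"
  proof -
    fix i a assume "i < d" "a < d"
    have "psd d (E (basis_proj d i))" using uc_pos[OF E basis_proj_psd] .
    then have "hpsd d (\<lambda>x y. E (basis_proj d i) $$ (x,y))" using psd_hpsd by blast
    then show "0 \<le> e i a" unfolding e_def using hpsd_diag(1) \<open>a < d\<close> by blast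
  qed
  have e1: "\<And>a. a < d \<Longrightarrow> (\<Sum>i<d. e i a) = 1"
  proof -
    fix a assume a: "a < d"
    have "E (Pi_k d d) $$ (a,a) = 1" using E a unfolding Pi_k_d unital_channel_def unital_def by simp
    then show "(\<Sum>i<d. e i a) = 1" unfolding e_def using E_Pi[OF L a a, of d] by (simp add: Re_sum[symmetric])
  qed
  have e2: "\<And>i. i < k' \<Longrightarrow> (\<Sum>a<k. e i a) = 1"
  proof -
    fix i assume i: "i < k'"
    have "E (basis_proj d i) \<in> C2_set d k" using m basis_proj_in_C2[OF i k(2)] by blast
    then obtain p where p: "\<forall>i<k. 0 \<le> p i" "(\<Sum>i<k. p i) = 1"
      and Xe: "E (basis_proj d i) = dg d (\<lambda>a. if a < k then p a else 0)"
      using C2_dg[of k d] k by (metis less_imp_le_nat order.strict_trans2 less_le_not_le)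
    have "(\<Sum>a<k. e i a) = (\<Sum>a<k. p a)"
      by (rule sum.cong[OF refl]) (use k in \<open>simp add: e_def Xe dg_index\<close>)
    then show "(\<Sum>a<k. e i a) = 1" using p by simp
  qed
  have "real k' = (\<Sum>i<k'. \<Sum>a<k. e i a)" using e2 by simp
  also have "\<dots> = (\<Sum>a<k. \<Sum>i<k'. e i a)" by (rule sum.swap)
  also have "\<dots> \<le> (\<Sum>a<k. \<Sum>i<d. e i a)"
    by (intro sum_mono sum_mono2) (use k e0 in auto)
  also have "\<dots> = real k" using e1 k by simp
  finally show False using k by simp
qed



lemma cs_real:
  fixes a b :: "nat \<Rightarrow> real"
  shows "(\<Sum>i<n. a i * b i)^2 \<le> (\<Sum>i<n. (a i)^2) * (\<Sum>i<n. (b i)^2)"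
proof -
  have e: "\<And>i j. (a i * b j - a j * b i)^2 = (a i)^2 * (b j)^2 + (b i)^2 * (a j)^2 - 2 * ((a i * b i) * (a j * b j))"
    by (simp add: power2_eq_square algebra_simps)
  have s1: "(\<Sum>i<n. \<Sum>j<n. (a i)^2 * (b j)^2) = (\<Sum>i<n. (a i)^2) * (\<Sum>i<n. (b i)^2)"
    by (simp add: sum_product)
  have s2: "(\<Sum>i<n. \<Sum>j<n. (b i)^2 * (a j)^2) = (\<Sum>i<n. (a i)^2) * (\<Sum>i<n. (b i)^2)"
    by (subst sum_product[symmetric]) (rule mult.commute)
  have s3: "(\<Sum>i<n. \<Sum>j<n. (a i * b i) * (a j * b j)) = (\<Sum>i<n. a i * b i)^2"
    by (simp add: sum_product power2_eq_square)
  have "0 \<le> (\<Sum>i<n. \<Sum>j<n. (a i * b j - a j * b i)^2)" by (intro sum_nonneg) simp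
  also have "\<dots> = (\<Sum>i<n. \<Sum>j<n. (a i)^2 * (b j)^2) + (\<Sum>i<n. \<Sum>j<n. (b i)^2 * (a j)^2)
       - 2 * (\<Sum>i<n. \<Sum>j<n. (a i * b i) * (a j * b j))"
    unfolding e by (simp add: sum_subtractf sum.distrib sum_distrib_left)
  finally show ?thesis unfolding s1 s2 s3 by simp
qed

lemma cs_complex:
  fixes x y :: "nat \<Rightarrow> complex"
  shows "(cmod (\<Sum>i<n. x i * y i))^2 \<le> (\<Sum>i<n. (cmod (x i))^2) * (\<Sum>i<n. (cmod (y i))^2)"
proof -
  have "cmod (\<Sum>i<n. x i * y i) \<le> (\<Sum>i<n. cmod (x i) * cmod (y i))"
    by (rule order_trans[OF norm_sum]) (simp add: norm_mult)
  then have "(cmod (\<Sum>i<n. x i * y i))^2 \<le> (\<Sum>i<n. cmod (x i) * cmod (y i))^2"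
    by (intro power_mono) auto
  also have "\<dots> \<le> (\<Sum>i<n. (cmod (x i))^2) * (\<Sum>i<n. (cmod (y i))^2)" by (rule cs_real)
  finally show ?thesis .
qed

lemma id_minus_density:
  assumes S: "\<sigma> \<in> density_ops d"
  shows "hpsd d (\<lambda>a b. (if a = b then 1 else 0) - \<sigma> $$ (a,b))"
proof -
  have ps: "psd d \<sigma>" and tr: "mtrace \<sigma> = 1" using S unfolding density_ops_def by auto
  have dr: "dim_row \<sigma> = d" using ps unfolding psd_def by auto
  have h: "hpsd d (\<lambda>i j. \<sigma> $$ (i,j))" using ps psd_hpsd by blast
  obtain u where u: "\<forall>a<d. \<forall>b<d. \<sigma> $$ (a,b) = (\<Sum>m<d. u m a * cnj (u m b))"
    using hpsd_decomp[OF h] by blast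
  have tru: "(\<Sum>m<d. \<Sum>a<d. (cmod (u m a))^2) = 1"
  proof -
    have "(\<Sum>a<d. \<sigma> $$ (a,a)) = 1" using tr dr unfolding mtrace_def by simp
    moreover have "(\<Sum>a<d. \<sigma> $$ (a,a)) = of_real (\<Sum>a<d. \<Sum>m<d. (cmod (u m a))^2)"
      unfolding of_real_sum
    proof (intro sum.cong refl)
      fix a assume "a \<in> {..<d}"
      then have "\<sigma> $$ (a,a) = (\<Sum>m<d. u m a * cnj (u m a))" using u by blast
      also have "\<dots> = (\<Sum>m<d. of_real ((cmod (u m a))^2))" by (simp only: complex_norm_square)
      finally show "\<sigma> $$ (a,a) = (\<Sum>m<d. of_real ((cmod (u m a))^2))" .
    qed
    ultimately have "complex_of_real (\<Sum>a<d. \<Sum>m<d. (cmod (u m a))^2) = 1" by simp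
    then have "(\<Sum>a<d. \<Sum>m<d. (cmod (u m a))^2) = 1" by (simp only: of_real_eq_1_iff)
    then show ?thesis by (subst sum.swap)
  qed
  show ?thesis
    unfolding hpsd_def
  proof (intro conjI allI impI)
    fix i j assume "i < d" "j < d"
    then show "(if j = i then 1 else 0) - \<sigma> $$ (j,i) = cnj ((if i = j then 1 else 0) - \<sigma> $$ (i,j))"
      using hpsd_herm[OF h, of i j] by simp
  next
    fix v
    define w where "w = (\<lambda>m. \<Sum>a<d. cnj (v a) * u m a)"
    have q1: "qf d (\<lambda>a b. (if a = b then 1 else 0) - \<sigma> $$ (a,b)) v
        = (\<Sum>i<d. \<Sum>j<d. cnj (v i) * (if i = j then 1 else 0) * v j) - qf d (\<lambda>i j. \<sigma> $$ (i,j)) v"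
      unfolding qf_def by (simp add: sum_subtractf algebra_simps)
    have q2: "(\<Sum>i<d. \<Sum>j<d. cnj (v i) * (if i = j then 1 else 0) * v j) = of_real (\<Sum>i<d. (cmod (v i))^2)"
      unfolding of_real_sum
    proof (intro sum.cong refl)
      fix i assume i: "i \<in> {..<d}"
      have "(\<Sum>j<d. cnj (v i) * (if i = j then 1 else 0) * v j) = cnj (v i) * v i"
        by (subst sum_collapse[of i]) (use i in auto)
      also have "\<dots> = of_real ((cmod (v i))^2)" by (simp only: complex_norm_square) (rule mult.commute)
      finally show "(\<Sum>j<d. cnj (v i) * (if i = j then 1 else 0) * v j) = of_real ((cmod (v i))^2)" .
    qed
    have q3: "qf d (\<lambda>i j. \<sigma> $$ (i,j)) v = of_real (\<Sum>m<d. (cmod (w m))^2)"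
    proof -
      have "qf d (\<lambda>i j. \<sigma> $$ (i,j)) v = (\<Sum>i<d. \<Sum>j<d. \<Sum>m<d. (cnj (v i) * u m i) * (cnj (u m j) * v j))"
        unfolding qf_def
        by (intro sum.cong refl) (simp add: u sum_distrib_left sum_distrib_right mult_ac)
      also have "\<dots> = (\<Sum>m<d. \<Sum>i<d. \<Sum>j<d. (cnj (v i) * u m i) * (cnj (u m j) * v j))"
        by (subst sum.swap) (rule sum.cong[OF refl], rule sum.swap)
      also have "\<dots> = (\<Sum>m<d. w m * cnj (w m))"
      proof (intro sum.cong refl)
        fix m
        have c: "cnj (w m) = (\<Sum>j<d. cnj (u m j) * v j)" unfolding w_def cnj_sum by (simp add: mult.commute)
        show "(\<Sum>i<d. \<Sum>j<d. (cnj (v i) * u m i) * (cnj (u m j) * v j)) = w m * cnj (w m)"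
          unfolding c unfolding w_def by (rule sum_product[symmetric])
      qed
      also have "\<dots> = of_real (\<Sum>m<d. (cmod (w m))^2)"
        unfolding of_real_sum by (intro sum.cong refl) (simp only: complex_norm_square)
      finally show ?thesis .
    qed
    have cs: "\<And>m. (cmod (w m))^2 \<le> (\<Sum>a<d. (cmod (v a))^2) * (\<Sum>a<d. (cmod (u m a))^2)"
      unfolding w_def using cs_complex[of "\<lambda>a. cnj (v a)" "\<lambda>a. u m a" d for m] by simp
    have "(\<Sum>m<d. (cmod (w m))^2) \<le> (\<Sum>m<d. (\<Sum>a<d. (cmod (v a))^2) * (\<Sum>a<d. (cmod (u m a))^2))"
      by (intro sum_mono cs)
    also have "\<dots> = (\<Sum>a<d. (cmod (v a))^2)" unfolding sum_distrib_left[symmetric] tru by simp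
    finally have le: "(\<Sum>m<d. (cmod (w m))^2) \<le> (\<Sum>a<d. (cmod (v a))^2)" .
    show "0 \<le> Re (qf d (\<lambda>a b. (if a = b then 1 else 0) - \<sigma> $$ (a,b)) v)"
      unfolding q1 q2 q3 using le by simp
  qed
qed



lemma Pi_k_dims[simp]: "dim_row (Pi_k d k) = d" "dim_col (Pi_k d k) = d" unfolding Pi_k_def by simp_all

definition dgk :: "nat \<Rightarrow> nat \<Rightarrow> complex mat" where
  "dgk d k = dg d (\<lambda>a. if a < k then 1 / real k else 0)"

lemma C_set_dgk: "C_set d k = {dgk d k}"
proof -
  have "(1 / of_nat k) \<cdot>\<^sub>m Pi_k d k = dgk d k"
    unfolding dgk_def by (rule mat_eqI'[of _ d]) (auto simp: Pi_k_index dg_index)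
  then show ?thesis unfolding C_set_def by simp
qed

lemma dgk_C2: assumes "1 \<le> k" "k \<le> d" shows "dgk d k \<in> C2_set d k"
  unfolding dgk_def
  by (rule dg_in_C2[where p="\<lambda>_. 1 / real k"]) (use assms in auto)

lemma trans_mono:
  "transforms d V W \<Longrightarrow> W \<subseteq> W' \<Longrightarrow> transforms d V W'"
  unfolding transforms_def by blast

lemma trans_C2_C2: assumes "0 < d" "k \<le> k'" "k' \<le> d" shows "transforms d (C2_set d k) (C2_set d k')"
  unfolding transforms_def using dph_channel[OF assms(1)] dph_C2[OF assms(2,3)] by blast

lemma trans_Om_C2: assumes "0 < d" shows "transforms d (density_ops d) (C2_set d d)"
  unfolding transforms_def using dph_channel[OF assms(1)] dph_density by blast

lemma trans_C_C2: assumes "1 \<le> k" "k \<le> d" shows "transforms d (C_set d k) (C2_set d k)"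
proof -
  have d: "0 < d" using assms by simp
  show ?thesis unfolding transforms_def C_set_dgk
    using dph_channel[OF d] dph_C2[OF order.refl assms(2) dgk_C2[OF assms]] by blast
qed

lemma sum_delta_ivl:
  "(\<Sum>i\<in>{(k::nat)..<d}. if i = a then c else (0::complex)) = (if k \<le> a \<and> a < d then c else 0)"
  by (subst sum.delta) auto

lemma trans_C2_C: assumes k: "1 \<le> k" "k \<le> d" shows "transforms d (C2_set d k) (C_set d k)"
proof -
  have d: "0 < d" using assms by simp
  define \<sigma> where "\<sigma> = (\<lambda>i. if i < k then dgk d k else basis_proj d i)"
  have ps: "\<And>i. i < d \<Longrightarrow> psd d (\<sigma> i)"
    unfolding \<sigma>_def dgk_def using dg_psd basis_proj_psd by simp
  have trk: "mtrace (dgk d k) = 1"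
    unfolding dgk_def dg_trace sum_if_less[OF k(2)] using k by simp
  have tr: "\<And>i. i < d \<Longrightarrow> mtrace (\<sigma> i) = 1"
    unfolding \<sigma>_def using trk basis_proj_trace by simp
  have dgk_idx: "\<And>a b. a < d \<Longrightarrow> b < d \<Longrightarrow> dgk d k $$ (a,b) = (if a = b \<and> a < k then 1 / of_nat k else 0)"
    unfolding dgk_def by (simp add: dg_index)
  have sm: "\<And>a b. a < d \<Longrightarrow> b < d \<Longrightarrow> (\<Sum>i<d. \<sigma> i $$ (a,b)) = (if a = b then 1 else 0)"
  proof -
    fix a b assume ab: "a < d" "b < d"
    have "(\<Sum>i<d. \<sigma> i $$ (a,b)) = (\<Sum>i<k. \<sigma> i $$ (a,b)) + (\<Sum>i\<in>{k..<d}. \<sigma> i $$ (a,b))"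
      by (rule sum_split_at[OF k(2)])
    also have "(\<Sum>i<k. \<sigma> i $$ (a,b)) = of_nat k * (if a = b \<and> a < k then 1 / of_nat k else 0)"
      unfolding \<sigma>_def using ab by (simp add: dgk_idx)
    also have "\<dots> = (if a = b \<and> a < k then 1 else 0)" using k by simp
    also have "(\<Sum>i\<in>{k..<d}. \<sigma> i $$ (a,b)) = (\<Sum>i\<in>{k..<d}. if i = a then (if a = b then 1 else 0) else 0)"
      by (rule sum.cong[OF refl]) (auto simp: \<sigma>_def basis_proj_index ab)
    also have "\<dots> = (if k \<le> a \<and> a < d then (if a = b then 1 else 0) else 0)" by (rule sum_delta_ivl)
    finally show "(\<Sum>i<d. \<sigma> i $$ (a,b)) = (if a = b then 1 else 0)" using ab by auto
  qed
  have ch: "unital_channel d (mp d \<sigma>)" using d ps tr sm by (rule mp_unital_channel)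
  have "\<forall>X\<in>C2_set d k. mp d \<sigma> X \<in> C_set d k"
  proof
    fix X assume X: "X \<in> C2_set d k"
    obtain p where p: "\<forall>i<k. 0 \<le> p i" "(\<Sum>i<k. p i) = 1" and Xe: "X = dg d (\<lambda>a. if a < k then p a else 0)"
      using C2_dg[OF k(2) X] by blast
    have "mp d \<sigma> X = dgk d k"
    proof (rule mat_eqI'[of _ d])
      fix a b assume ab: "a < d" "b < d"
      have "mp d \<sigma> X $$ (a,b) = (\<Sum>i<d. X $$ (i,i) * \<sigma> i $$ (a,b))" using ab by (simp add: mp_index)
      also have "\<dots> = (\<Sum>i<k. X $$ (i,i) * \<sigma> i $$ (a,b)) + (\<Sum>i\<in>{k..<d}. X $$ (i,i) * \<sigma> i $$ (a,b))"
        by (rule sum_split_at[OF k(2)])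
      also have "(\<Sum>i\<in>{k..<d}. X $$ (i,i) * \<sigma> i $$ (a,b)) = 0"
        by (rule sum.neutral) (auto simp: Xe dg_index)
      also have "(\<Sum>i<k. X $$ (i,i) * \<sigma> i $$ (a,b)) = (\<Sum>i<k. of_real (p i)) * dgk d k $$ (a,b)"
        unfolding sum_distrib_right by (rule sum.cong[OF refl]) (use k in \<open>auto simp: Xe dg_index \<sigma>_def\<close>)
      also have "(\<Sum>i<k. complex_of_real (p i)) = 1" using p(2) by (simp flip: of_real_sum)
      finally show "mp d \<sigma> X $$ (a,b) = dgk d k $$ (a,b)" by simp
    qed (simp_all add: dgk_def)
    then show "mp d \<sigma> X \<in> C_set d k" unfolding C_set_dgk by simp
  qed
  then show ?thesis unfolding transforms_def using ch by blast
qed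



lemma hpsd_cong:
  assumes h: "hpsd n S" and e: "\<And>a b. a < n \<Longrightarrow> b < n \<Longrightarrow> S a b = S' a b"
  shows "hpsd n S'"
  unfolding hpsd_def
proof (intro conjI allI impI)
  fix i j assume "i < n" "j < n"
  then show "S' j i = cnj (S' i j)" using hpsd_herm[OF h, of i j] e by simp
next
  fix v
  have "qf n S' v = qf n S v" unfolding qf_def by (intro sum.cong refl) (simp add: e)
  then show "0 \<le> Re (qf n S' v)" using hpsd_pos[OF h] by simp
qed

lemma hpsd_scale:
  assumes h: "hpsd n S" and c: "0 < c"
  shows "hpsd n (\<lambda>a b. S a b / of_real c)"
  unfolding hpsd_def
proof (intro conjI allI impI)
  fix i j assume "i < n" "j < n"
  then show "S j i / of_real c = cnj (S i j / of_real c)" using hpsd_herm[OF h, of i j] by simp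
next
  fix v
  have "qf n (\<lambda>a b. S a b / of_real c) v = qf n S v / of_real c"
    unfolding qf_def sum_divide_distrib by (intro sum.cong refl) simp
  then have "Re (qf n (\<lambda>a b. S a b / of_real c) v) = Re (qf n S v) / c" by simp
  then show "0 \<le> Re (qf n (\<lambda>a b. S a b / of_real c) v)" using hpsd_pos[OF h] c by simp
qed

lemma univ_channel:
  assumes d: "1 \<le> d" and S: "\<sigma> \<in> density_ops d"
  shows "transforms d (C2_set d 1) {\<sigma>}"
proof -
  have d0: "0 < d" using d by simp
  have ps: "psd d \<sigma>" and trs: "mtrace \<sigma> = 1" using S unfolding density_ops_def by auto
  have sc: "\<sigma> \<in> carrier_mat d d" using ps unfolding psd_def by auto
  define M where "M = mat d d (\<lambda>(a,b). ((if a = b then 1 else 0) - \<sigma> $$ (a,b)) / of_real (real (d - 1)))"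
  define \<tau> :: "nat \<Rightarrow> complex mat" where "\<tau> = (\<lambda>i. if i = 0 then \<sigma> else M)"
  have Mi: "\<And>a b. a < d \<Longrightarrow> b < d \<Longrightarrow> M $$ (a,b) = ((if a = b then 1 else 0) - \<sigma> $$ (a,b)) / of_real (real (d - 1))"
    unfolding M_def by simp
  have psM: "2 \<le> d \<Longrightarrow> psd d M"
  proof -
    assume d2: "2 \<le> d"
    have "hpsd d (\<lambda>a b. ((if a = b then 1 else 0) - \<sigma> $$ (a,b)) / of_real (real (d - 1)))"
      by (rule hpsd_scale[OF id_minus_density[OF S]]) (use d2 in simp)
    then have "hpsd d (\<lambda>a b. M $$ (a,b))" by (rule hpsd_cong) (simp add: Mi)
    then show "psd d M" unfolding psd_hpsd M_def by simp
  qed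
  have trM: "2 \<le> d \<Longrightarrow> mtrace M = 1"
  proof -
    assume d2: "2 \<le> d"
    have "mtrace M = (\<Sum>a<d. (1 - \<sigma> $$ (a,a)) / of_real (real (d - 1)))"
      unfolding mtrace_def M_def by (intro sum.cong) auto
    also have "\<dots> = (of_nat d - (\<Sum>a<d. \<sigma> $$ (a,a))) / of_real (real (d - 1))"
      by (simp only: sum_divide_distrib[symmetric] sum_subtractf) simp
    also have "(\<Sum>a<d. \<sigma> $$ (a,a)) = 1" using trs sc unfolding mtrace_def by simp
    moreover have "(of_nat (d - Suc 0) :: complex) = of_nat d - 1" using d2 by (simp add: of_nat_diff)
    moreover have "(of_nat d :: complex) - 1 \<noteq> 0" using d2
      by simp
    ultimately show "mtrace M = 1" by simp
  qed
  have ps\<tau>: "\<And>i. i < d \<Longrightarrow> psd d (\<tau> i)" unfolding \<tau>_def using ps psM by auto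
  have tr\<tau>: "\<And>i. i < d \<Longrightarrow> mtrace (\<tau> i) = 1" unfolding \<tau>_def using trs trM by auto
  have sm: "\<And>a b. a < d \<Longrightarrow> b < d \<Longrightarrow> (\<Sum>i<d. \<tau> i $$ (a,b)) = (if a = b then 1 else 0)"
  proof -
    fix a b assume ab: "a < d" "b < d"
    have "(\<Sum>i<d. \<tau> i $$ (a,b)) = (\<Sum>i<1. \<tau> i $$ (a,b)) + (\<Sum>i\<in>{1..<d}. \<tau> i $$ (a,b))"
      by (rule sum_split_at[OF d])
    also have "(\<Sum>i\<in>{1..<d}. \<tau> i $$ (a,b)) = of_nat (d - 1) * M $$ (a,b)"
      by (simp add: \<tau>_def)
    finally have e: "(\<Sum>i<d. \<tau> i $$ (a,b)) = \<sigma> $$ (a,b) + of_nat (d - 1) * M $$ (a,b)" by (simp add: \<tau>_def)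
    show "(\<Sum>i<d. \<tau> i $$ (a,b)) = (if a = b then 1 else 0)"
    proof (cases "d = 1")
      case True
      then have "a = 0" "b = 0" using ab by auto
      moreover have "\<sigma> $$ (0,0) = 1" using trs sc True unfolding mtrace_def by simp
      ultimately show ?thesis unfolding e using True by simp
    next
      case False
      then have "real (d - 1) \<noteq> 0" using d by simp
      then show ?thesis unfolding e Mi[OF ab] by (simp add: field_simps)
    qed
  qed
  have ch: "unital_channel d (mp d \<tau>)" using d0 ps\<tau> tr\<tau> sm by (rule mp_unital_channel)
  have "\<forall>X\<in>C2_set d 1. mp d \<tau> X \<in> {\<sigma>}"
  proof
    fix X assume X: "X \<in> C2_set d 1"
    obtain p where p: "\<forall>i<1. 0 \<le> p i" "(\<Sum>i<1. p i) = 1" and Xe: "X = dg d (\<lambda>a. if a < 1 then p a else 0)"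
      using C2_dg[OF d X] by blast
    have p0: "p 0 = 1" using p(2) by simp
    have "mp d \<tau> X = \<sigma>"
    proof (rule mat_eqI'[of _ d])
      fix a b assume ab: "a < d" "b < d"
      have "mp d \<tau> X $$ (a,b) = (\<Sum>i<d. X $$ (i,i) * \<tau> i $$ (a,b))" using ab by (simp add: mp_index)
      also have "\<dots> = X $$ (0,0) * \<tau> 0 $$ (a,b)"
        by (rule sum_collapse[OF d0]) (simp add: Xe dg_index)
      also have "\<dots> = \<sigma> $$ (a,b)" using d0 by (simp add: Xe dg_index p0 \<tau>_def)
      finally show "mp d \<tau> X $$ (a,b) = \<sigma> $$ (a,b)" .
    qed (simp_all add: sc)
    then show "mp d \<tau> X \<in> {\<sigma>}" by simp
  qed
  then show ?thesis unfolding transforms_def using ch by blast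
qed



lemma trans_anti: "transforms d V W \<Longrightarrow> V' \<subseteq> V \<Longrightarrow> transforms d V' W"
  unfolding transforms_def by blast

lemma Cur2_cases[consumes 1, case_names C2 Om]:
  assumes "C \<in> Cur2 d"
  obtains (C2) k where "k \<in> {1..d}" "C = C2_set d k" | (Om) "C = density_ops d"
  using assms unfolding Cur2_def by blast

theorem mainTheorem16:
  fixes d :: nat
  assumes "1 \<le> d"
  shows "(\<forall>k \<in> {1..d}. transforms d (C_set d k) (C2_set d k) \<and> transforms d (C2_set d k) (C_set d k))
     \<and> is_currency d (Cur2 d) (S_Omega d)
     \<and> (\<forall>Val. Val (density_ops d) = 0 \<and>
              (\<forall>k \<in> {1..d}. Val (C2_set d k) = log 2 (real d) - log 2 (real k))
           \<longrightarrow> is_value_function d (Cur2 d) Val)"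
proof -
  have d0: "0 < d" using assms by simp
  have subD: "\<And>k. k \<le> d \<Longrightarrow> C2_set d k \<subseteq> density_ops d" by (rule C2_sub_density)
  have tC2Om: "\<And>k. k \<le> d \<Longrightarrow> transforms d (C2_set d k) (density_ops d)"
    using trans_mono[OF trans_C2_C2[OF d0 _ order.refl] subD[OF order.refl]] by blast
  have tOmOm: "transforms d (density_ops d) (density_ops d)"
    using trans_mono[OF trans_Om_C2[OF d0] subD[OF order.refl]] .
  have nt: "\<And>k k'. k < k' \<Longrightarrow> k' \<le> d \<Longrightarrow> \<not> transforms d (C2_set d k') (C2_set d k)"
    unfolding transforms_def using no_trans by blast
  have ntOm: "\<And>k. k < d \<Longrightarrow> \<not> transforms d (density_ops d) (C2_set d k)"
    using nt trans_anti subD by blast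
  have ne: "\<And>k. 1 \<le> k \<Longrightarrow> k \<le> d \<Longrightarrow> basis_proj d 0 \<in> C2_set d k"
    by (rule basis_proj_in_C2) auto
  have part1: "\<forall>k \<in> {1..d}. transforms d (C_set d k) (C2_set d k) \<and> transforms d (C2_set d k) (C_set d k)"
    using trans_C_C2 trans_C2_C by auto
  have cur: "is_currency d (Cur2 d) (S_Omega d)"
    unfolding is_currency_def
  proof (intro conjI ballI)
    show "Cur2 d \<subseteq> S_Omega d"
    proof
      fix C assume "C \<in> Cur2 d"
      then show "C \<in> S_Omega d"
      proof (cases rule: Cur2_cases)
        case (C2 k)
        then show ?thesis unfolding S_Omega_def using ne[of k] subD[of k] by auto
      next
        case Om
        then show ?thesis unfolding S_Omega_def using ne[of d] subD[of d] assms by auto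
      qed
    qed
  next
    fix C C' assume C: "C \<in> Cur2 d" and C': "C' \<in> Cur2 d"
    show "transforms d C C' \<or> transforms d C' C"
    using C proof (cases rule: Cur2_cases)
      case (C2 k)
      show ?thesis
      using C' proof (cases rule: Cur2_cases)
        case (C2 k')
        then show ?thesis using \<open>k \<in> {1..d}\<close> \<open>C = C2_set d k\<close> trans_C2_C2[OF d0]
          by (cases "k \<le> k'") auto
      next
        case Om then show ?thesis using C2 tC2Om by auto
      qed
    next
      case Om
      show ?thesis
      using C' proof (cases rule: Cur2_cases)
        case (C2 k') then show ?thesis using Om tC2Om by auto
      next
        case Om2: Om then show ?thesis using Om tOmOm by auto
      qed
    qed
  next
    show "density_ops d \<in> Cur2 d" unfolding Cur2_def by simp
    show "density_ops d \<in> S_Omega d" unfolding S_Omega_def using ne[of d] subD[of d] assms by auto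
  next
    fix V assume V: "V \<in> S_Omega d"
    then obtain \<sigma> where s: "\<sigma> \<in> V" and Vs: "V \<subseteq> density_ops d" unfolding S_Omega_def by auto
    have "transforms d (C2_set d 1) V"
      using trans_mono[OF univ_channel[OF assms] ] s Vs by blast
    moreover have "transforms d V (density_ops d)" using trans_anti[OF tOmOm Vs] .
    moreover have "C2_set d 1 \<in> Cur2 d" "density_ops d \<in> Cur2 d" unfolding Cur2_def using assms by auto
    ultimately show "\<exists>C\<in>Cur2 d. \<exists>C'\<in>Cur2 d. transforms d C V \<and> transforms d V C'" by blast
  qed
  have val: "\<forall>Val. Val (density_ops d) = 0 \<and>
              (\<forall>k \<in> {1..d}. Val (C2_set d k) = log 2 (real d) - log 2 (real k))
           \<longrightarrow> is_value_function d (Cur2 d) Val"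
  proof (intro allI impI)
    fix Val :: "complex mat set \<Rightarrow> real"
    assume H: "Val (density_ops d) = 0 \<and> (\<forall>k \<in> {1..d}. Val (C2_set d k) = log 2 (real d) - log 2 (real k))"
    have V0: "Val (density_ops d) = 0" using H by blast
    have Vk: "\<And>k. k \<in> {1..d} \<Longrightarrow> Val (C2_set d k) = log 2 (real d) - log 2 (real k)" using H by blast
    have lg: "\<And>k k'. k \<in> {1..d} \<Longrightarrow> k' \<in> {1..d} \<Longrightarrow> (log 2 (real k') \<le> log 2 (real k)) = (k' \<le> k)"
      by auto
    show "is_value_function d (Cur2 d) Val"
      unfolding is_value_function_def
    proof (intro conjI ballI)
      fix C assume "C \<in> Cur2 d"
      then show "0 \<le> Val C"
      proof (cases rule: Cur2_cases)
        case (C2 k) then show ?thesis using Vk lg[of d k] by auto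
      next
        case Om then show ?thesis using V0 by simp
      qed
    next
      fix C C' assume C: "C \<in> Cur2 d" and C': "C' \<in> Cur2 d"
      show "(Val C \<le> Val C') = transforms d C' C"
      using C proof (cases rule: Cur2_cases)
        case (C2 k)
        note k = this
        show ?thesis
        using C' proof (cases rule: Cur2_cases)
          case (C2 k')
          have "(Val C \<le> Val C') = (k' \<le> k)" using k C2 Vk lg by auto
          also have "\<dots> = transforms d C' C"
          proof
            assume "k' \<le> k" then show "transforms d C' C" using k C2 trans_C2_C2[OF d0] by auto
          next
            assume "transforms d C' C" then show "k' \<le> k" using k C2 nt[of k k'] by force
          qed
          finally show ?thesis .
        next
          case Om
          have "(Val C \<le> Val C') = (d \<le> k)" using k Om Vk V0 lg[of k d] by auto
          also have "\<dots> = transforms d C' C"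
          proof
            assume "d \<le> k" then have "k = d" using k by auto
            then show "transforms d C' C" using k Om trans_Om_C2[OF d0] by simp
          next
            assume "transforms d C' C" then show "d \<le> k" using k Om ntOm[of k] by force
          qed
          finally show ?thesis .
        qed
      next
        case Om
        show ?thesis
        using C' proof (cases rule: Cur2_cases)
          case (C2 k')
          have "0 \<le> Val C'" using C2 Vk lg[of d k'] by auto
          then show ?thesis using Om C2 V0 tC2Om by auto
        next
          case Om2: Om then show ?thesis using Om V0 tOmOm by simp
        qed
      qed
    next
      show "Val (density_ops d) = 0" by (rule V0)
    qed
  qed
  show ?thesis using part1 cur val by blast
qed

end
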